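(* Consider the two-species chemistry on states $(e,s)\in\mathbb Z_{\ge0}^2$ with reactions $E\to2E$ (rate constant $1$) and $E+S\to E+2S$ (rate constant $1$) under stochastic mass-action kinetics, with generator $\mathcal A$. Then: (1) this chemistry is not explosive; (2) for all $c_1,c_2>0$, with $f(e,s)=c_1e+c_2s$, and for all $c_3,c_4\ge0$, there exist $e,s\in\mathbb Z_{\ge0}$ with $\mathcal Af(e,s)>c_3f(e,s)+c_4$; (3) the coarse-grained compartment model $N$ with this internal chemistry, in which each compartment fragments at rate equal to its number of $S$ molecules (with an arbitrary fragmentation kernel $\psi$) and there is no compartment inflow, exit or coagulation, is not explosive.
   Context: Under mass-action kinetics, in state $(e,s)$ the reaction $E\to2E$ fires at rate $e$ and moves to $(e+1,s)$, and $E+S\to E+2S$ fires at rate $es$ and moves to $(e,s+1)$; so $\mathcal Af(e,s)=e\big(f(e+1,s)-f(e,s)\big)+es\big(f(e,s+1)-f(e,s)\big)$. The compartment model $N$ has state space $\mathcal N=\{n:\mathbb Z_{\ge0}^2\to\mathbb Z_{\ge0}\text{ with finite support}\}$ ($n_x$ = number of compartments with internal state $x$, $e_x$ the indicator of $x$), fragmentation kernel $\psi$ with $\psi(x,y)=0$ unless $0\le y\le x$ componentwise and $y\mapsto\psi(x,y)$ a probability measure, and generator $\mathcal LV(n)=\sum_{x=(e,s)}\Big[n_xe\big(V(n-e_x+e_{(e+1,s)})-V(n)\big)+n_xes\big(V(n-e_x+e_{(e,s+1)})-V(n)\big)+s\,n_x\sum_y\psi(x,y)\big(V(n-e_x+e_y+e_{x-y})-V(n)\big)\Big]$.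 A continuous-time Markov chain is explosive if from some initial state it makes infinitely many jumps in finite time with positive probability, and non-explosive otherwise. *)

theory Defs
  imports "HOL-Analysis.Analysis" "HOL-Library.Multiset"
begin

text \<open>A chain on a countable type 'a is given by off-diagonal jump rates q x y
  (rate of jumping from x to y), each row having finitely many nonzero entries.
  The standard (jump chain / holding time) construction: in state x the chain waits
  an Exp(total_rate q x) time and then jumps to y with probability q x y / total_rate q x;
  if total_rate q x = 0 the state is absorbing (no further jumps).\<close>

definition jump_support :: "('a \<Rightarrow> 'a \<Rightarrow> real) \<Rightarrow> 'a \<Rightarrow> 'a set" where
  "jump_support q x = {y. y \<noteq> x \<and> q x y \<noteq> 0}"

definition total_rate :: "('a \<Rightarrow> 'a \<Rightarrow> real) \<Rightarrow> 'a \<Rightarrow> real" where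
  "total_rate q x = (\<Sum>y\<in>jump_support q x. q x y)"

text \<open>jump_time_cdf q n x t = P_x(J_n \<le> t), where J_n is the time of the n-th jump
  of the chain started at x (J_n = infinity if the chain gets absorbed before n jumps).
  Computed by conditioning on the first holding time u and the first jump target y.\<close>

primrec jump_time_cdf :: "('a \<Rightarrow> 'a \<Rightarrow> real) \<Rightarrow> nat \<Rightarrow> 'a \<Rightarrow> real \<Rightarrow> real" where
  "jump_time_cdf q 0 = (\<lambda>x t. if 0 \<le> t then 1 else 0)"
| "jump_time_cdf q (Suc n) = (\<lambda>x t. if total_rate q x = 0 then 0 else
     (LINT u:{0..t}|lborel. exp (- total_rate q x * u) *
        (\<Sum>y\<in>jump_support q x. q x y * jump_time_cdf q n y (t - u))))"

text \<open>Explosive: from some initial state x, with positive probability infinitely many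
  jumps occur in finite time, i.e. P_x(zeta < infinity) > 0 with zeta = lim J_n.
  Since {zeta < infinity} = U_T  /\_n {J_n \<le> T} (decreasing in n), this is equivalent to:
  for some x and T, P_x(J_n \<le> T) stays bounded below by some eps > 0 for all n.\<close>

definition explosive :: "('a \<Rightarrow> 'a \<Rightarrow> real) \<Rightarrow> bool" where
  "explosive q \<longleftrightarrow> (\<exists>x T. \<exists>\<epsilon>>0. \<forall>n. jump_time_cdf q n x T \<ge> \<epsilon>)"

definition non_explosive :: "('a \<Rightarrow> 'a \<Rightarrow> real) \<Rightarrow> bool" where
  "non_explosive q \<longleftrightarrow> \<not> explosive q"

definition q_chem :: "nat \<times> nat \<Rightarrow> nat \<times> nat \<Rightarrow> real" where
  "q_chem = (\<lambda>(e, s) z. (if z = (Suc e, s) then real e else 0)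
                      + (if z = (e, Suc s) then real e * real s else 0))"

definition gen_A :: "(nat \<times> nat \<Rightarrow> real) \<Rightarrow> nat \<times> nat \<Rightarrow> real" where
  "gen_A f = (\<lambda>(e, s). real e * (f (Suc e, s) - f (e, s))
                     + real e * real s * (f (e, Suc s) - f (e, s)))"

text \<open>States n : finitely supported maps Z_{\<ge>0}^2 -> Z_{\<ge>0}, represented as multisets
  of internal states (count n x = n_x).\<close>

definition frag_kernel :: "(nat \<times> nat \<Rightarrow> nat \<times> nat \<Rightarrow> real) \<Rightarrow> bool" where
  "frag_kernel \<psi> \<longleftrightarrow>
     (\<forall>x y. 0 \<le> \<psi> x y) \<and>
     (\<forall>x y. \<not> (fst y \<le> fst x \<and> snd y \<le> snd x) \<longrightarrow> \<psi> x y = 0) \<and>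
     (\<forall>x. (\<Sum>y\<in>{y. fst y \<le> fst x \<and> snd y \<le> snd x}. \<psi> x y) = 1)"

definition q_N :: "(nat \<times> nat \<Rightarrow> nat \<times> nat \<Rightarrow> real)
                    \<Rightarrow> (nat \<times> nat) multiset \<Rightarrow> (nat \<times> nat) multiset \<Rightarrow> real" where
  "q_N \<psi> n m = (if m = n then 0 else
     (\<Sum>x\<in>set_mset n. real (count n x) *
        (case x of (e, s) \<Rightarrow>
            (if m = n - {#x#} + {#(Suc e, s)#} then real e else 0)
          + (if m = n - {#x#} + {#(e, Suc s)#} then real e * real s else 0)
          + real s * (\<Sum>y\<in>{y. fst y \<le> e \<and> snd y \<le> s}.
                if m = n - {#x#} + {#y, (e - fst y, s - snd y)#} then \<psi> x y else 0))))"

end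

theory Submission
  imports Defs
begin


lemma sum_count_mset: "(\<Sum>x\<in>set_mset n. real (count n x) * f x) = (\<Sum>x\<in>#n. f x)"
proof (induction n)
  case empty
  then show ?case by simp
next
  case (add a M)
  show ?case
  proof (cases "a \<in># M")
    case True
    then have "(\<Sum>x\<in>set_mset (add_mset a M). real (count (add_mset a M) x) * f x)
       = (\<Sum>x\<in>set_mset M. real (count M x) * f x + (if x = a then f x else 0))"
      by (auto intro!: sum.cong simp: algebra_simps insert_absorb)
    also have "\<dots> = (\<Sum>x\<in>#M. f x) + f a" using True add by (simp add: sum.distrib)
    finally show ?thesis by simp
  next
    case False
    then have "(\<Sum>x\<in>set_mset (add_mset a M). real (count (add_mset a M) x) * f x)
       = f a + (\<Sum>x\<in>set_mset M. real (count M x) * f x)"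
      using False by (auto simp: not_in_iff intro!: sum.cong) (metis not_in_iff)
    then show ?thesis using add by simp
  qed
qed

lemma fact_lim: "(\<lambda>n. (L::real)^n / fact n) \<longlonglongrightarrow> 0"
proof -
  have "summable (\<lambda>n. inverse (fact n) * L^n)" by (rule summable_exp)
  then have "(\<lambda>n. inverse (fact n) * L^n) \<longlonglongrightarrow> 0" by (rule summable_LIMSEQ_zero)
  then show ?thesis by (simp add: field_simps)
qed



lemma int_le:
  fixes f g :: "real \<Rightarrow> real"
  assumes "\<And>u. u \<in> {0..t} \<Longrightarrow> f u \<le> g u" "continuous_on {0..t} g"
    "\<And>u. u \<in> {0..t} \<Longrightarrow> 0 \<le> g u"
  shows "(LINT u:{0..t}|lborel. f u) \<le> (LINT u:{0..t}|lborel. g u)"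
proof (cases "set_integrable lborel {0..t} f")
  case True
  have gi: "set_integrable lborel {0..t} g" by (rule borel_integrable_atLeastAtMost'[OF assms(2)])
  show ?thesis by (rule set_integral_mono[OF True gi assms(1)])
next
  case False
  then have "(LINT u:{0..t}|lborel. f u) = 0"
    unfolding set_lebesgue_integral_def set_integrable_def by (simp add: not_integrable_integral_eq)
  moreover have "0 \<le> (LINT u:{0..t}|lborel. g u)"
    unfolding set_lebesgue_integral_def
    by (rule Bochner_Integration.integral_nonneg) (auto simp: indicator_def assms(3))
  ultimately show ?thesis by simp
qed

lemma int_eval:
  fixes a K L t :: real
  assumes a: "0 < a" and t: "0 \<le> t"
  shows "(LINT u:{0..t}|lborel. K * a * exp (- a * u) + L^(Suc n) * (t - u)^n / fact n)
       = K * (1 - exp (- a * t)) + L^(Suc n) * t^(Suc n) / fact (Suc n)"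
proof -
  let ?g = "\<lambda>u. K * a * exp (- a * u) + L^(Suc n) * (t - u)^n / fact n"
  let ?G = "\<lambda>u. - K * exp (- a * u) - L^(Suc n) * (t - u)^(Suc n) / fact (Suc n)"
  have cont: "continuous_on {0..t} ?g" by (intro continuous_intros) auto
  have "(?g has_integral (?G t - ?G 0)) {0..t}"
  proof (rule fundamental_theorem_of_calculus[OF t])
    fix x assume "x \<in> {0..t}"
    have "(?G has_real_derivative ?g x) (at x within {0..t})"
      by (rule derivative_eq_intros refl | simp)+
    then show "(?G has_vector_derivative ?g x) (at x within {0..t})"
      by (simp add: has_real_derivative_iff_has_vector_derivative)
  qed
  then have "integral {0..t} ?g = ?G t - ?G 0" by (rule integral_unique)
  moreover have "(LINT u:{0..t}|lborel. ?g u) = integral {0..t} ?g"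
    by (rule set_borel_integral_eq_integral(2)[OF borel_integrable_atLeastAtMost'[OF cont]])
  ultimately show ?thesis by (simp add: field_simps)
qed



lemma total_rate_nn: assumes "\<And>x y. 0 \<le> q x y" shows "0 \<le> total_rate q x"
  unfolding total_rate_def by (rule sum_nonneg) (simp add: assms)

lemma F_le1:
  assumes qnn: "\<And>x y. 0 \<le> q x y"
  shows "jump_time_cdf q n x t \<le> 1"
proof (induction n arbitrary: x t)
  case 0
  then show ?case by simp
next
  case (Suc n)
  let ?l = "total_rate q x"
  show ?case
  proof (cases "?l = 0")
    case True then show ?thesis by simp
  next
    case False
    then have lpos: "0 < ?l" using total_rate_nn[of q x, OF qnn] by simp
    have "(LINT u:{0..t}|lborel. exp (- ?l * u) *
        (\<Sum>y\<in>jump_support q x. q x y * jump_time_cdf q n y (t - u)))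
       \<le> (LINT u:{0..t}|lborel. 1 * ?l * exp (- ?l * u) + 0^(Suc 0) * (t - u)^0 / fact 0)"
    proof (rule int_le)
      fix u assume "u \<in> {0..t}"
      have "(\<Sum>y\<in>jump_support q x. q x y * jump_time_cdf q n y (t - u))
          \<le> (\<Sum>y\<in>jump_support q x. q x y * 1)"
        by (rule sum_mono) (intro mult_left_mono Suc qnn)
      also have "\<dots> = ?l" by (simp add: total_rate_def)
      finally show "exp (- ?l * u) * (\<Sum>y\<in>jump_support q x. q x y * jump_time_cdf q n y (t - u))
          \<le> 1 * ?l * exp (- ?l * u) + 0^(Suc 0) * (t - u)^0 / fact 0"
        by (simp add: mult.commute mult_left_mono)
    next
      show "continuous_on {0..t} (\<lambda>u. 1 * ?l * exp (- ?l * u) + 0^(Suc 0) * (t - u)^0 / fact 0)"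
        by (intro continuous_intros) auto
    next
      fix u assume "u \<in> {0..t}"
      show "0 \<le> 1 * ?l * exp (- ?l * u) + 0^(Suc 0) * (t - u)^0 / fact 0" using lpos by simp
    qed
    also have "\<dots> \<le> 1"
    proof (cases "0 \<le> t")
      case True
      show ?thesis
        apply (subst int_eval[OF lpos True]) by simp
    next
      case False
      then have "{0..t} = ({}::real set)" by auto
      then show ?thesis by (simp add: set_lebesgue_integral_def)
    qed
    finally show ?thesis using False by simp
  qed
qed

lemma F_main:
  assumes qnn: "\<And>x y. 0 \<le> q x y" and Vnn: "\<And>x. 0 \<le> V x" and c: "0 \<le> c"
    and drift: "\<And>x. (\<Sum>y\<in>jump_support q x. q x y * V y) \<le> (total_rate q x + c) * V x"
    and M: "0 < M" and Lam: "0 \<le> \<Lambda>" and bnd: "\<And>x. V x < M \<Longrightarrow> total_rate q x \<le> \<Lambda>"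
  shows "0 \<le> t \<Longrightarrow> jump_time_cdf q n x t \<le> exp (c * t) * V x / M + (\<Lambda> * t)^n / fact n"
proof (induction n arbitrary: x t)
  case 0
  then show ?case using Vnn[of x] M by simp
next
  case (Suc n)
  let ?l = "total_rate q x"
  let ?B = "\<lambda>y s. exp (c * s) * V y / M + (\<Lambda> * s)^n / fact n"
  have Bpos: "0 \<le> (\<Lambda> * t)^(Suc n) / fact (Suc n)" using Lam Suc.prems by simp
  show ?case
  proof (cases "?l = 0")
    case True then show ?thesis using Bpos Vnn[of x] M by simp
  next
    case False
    then have lpos: "0 < ?l" using total_rate_nn[of q x, OF qnn] by simp
    show ?thesis
    proof (cases "V x < M")
      case False
      have "1 \<le> exp (c * t)" using c Suc.prems by simp
      moreover have "1 \<le> V x / M" using False M by simp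
      ultimately have "1 * 1 \<le> exp (c * t) * (V x / M)" by (intro mult_mono) auto
      then show ?thesis using F_le1[of q "Suc n" x t, OF qnn] Bpos by simp
    next
      case True
      have lL: "?l \<le> \<Lambda>" using bnd[OF True] .
      define K where "K = exp (c * t) * V x / M"
      have "(LINT u:{0..t}|lborel. exp (- ?l * u) *
          (\<Sum>y\<in>jump_support q x. q x y * jump_time_cdf q n y (t - u)))
         \<le> (LINT u:{0..t}|lborel. K * (?l + c) * exp (- (?l + c) * u) + \<Lambda>^(Suc n) * (t - u)^n / fact n)"
      proof (rule int_le)
        fix u assume u: "u \<in> {0..t}"
        then have tu: "0 \<le> t - u" by simp
        have "(\<Sum>y\<in>jump_support q x. q x y * jump_time_cdf q n y (t - u))
            \<le> (\<Sum>y\<in>jump_support q x. q x y * ?B y (t - u))"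
          by (rule sum_mono) (intro mult_left_mono Suc.IH tu qnn)
        also have "\<dots> = exp (c * (t - u)) / M * (\<Sum>y\<in>jump_support q x. q x y * V y)
              + ?l * ((\<Lambda> * (t - u))^n / fact n)"
        proof -
          have "(\<Sum>y\<in>jump_support q x. q x y * ?B y (t - u))
             = (\<Sum>y\<in>jump_support q x. exp (c * (t - u)) / M * (q x y * V y) + (\<Lambda> * (t - u))^n / fact n * q x y)"
            by (rule sum.cong) (simp_all add: algebra_simps)
          also have "\<dots> = exp (c * (t - u)) / M * (\<Sum>y\<in>jump_support q x. q x y * V y)
              + (\<Lambda> * (t - u))^n / fact n * ?l"
            by (simp add: sum.distrib sum_distrib_left total_rate_def)
          finally show ?thesis by simp
        qed
        also have "\<dots> \<le> exp (c * (t - u)) / M * ((?l + c) * V x) + \<Lambda> * ((\<Lambda> * (t - u))^n / fact n)"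
          apply (rule add_mono)
           apply (rule mult_left_mono[OF drift]) using M apply simp
          apply (rule mult_right_mono[OF lL]) using Lam tu by simp
        finally have h: "(\<Sum>y\<in>jump_support q x. q x y * jump_time_cdf q n y (t - u))
            \<le> exp (c * (t - u)) / M * ((?l + c) * V x) + \<Lambda> * ((\<Lambda> * (t - u))^n / fact n)" .
        have e1: "exp (- ?l * u) \<le> 1" using u lpos by simp
        have "exp (- ?l * u) * (\<Sum>y\<in>jump_support q x. q x y * jump_time_cdf q n y (t - u))
           \<le> exp (- ?l * u) * (exp (c * (t - u)) / M * ((?l + c) * V x)) + exp (- ?l * u) * (\<Lambda> * ((\<Lambda> * (t - u))^n / fact n))"
          using mult_left_mono[OF h, of "exp (- ?l * u)"] by (simp add: algebra_simps)
        also have "\<dots> \<le> exp (- ?l * u) * (exp (c * (t - u)) / M * ((?l + c) * V x)) + 1 * (\<Lambda> * ((\<Lambda> * (t - u))^n / fact n))"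
          apply (rule add_left_mono, rule mult_right_mono[OF e1]) using Lam tu by simp
        also have "exp (- ?l * u) * (exp (c * (t - u)) / M * ((?l + c) * V x)) = K * (?l + c) * exp (- (?l + c) * u)"
        proof -
          have ee: "exp (- ?l * u) * exp (c * (t - u)) = exp (c * t) * exp (- (?l + c) * u)"
            unfolding mult_exp_exp by (rule arg_cong[where f=exp]) (simp add: algebra_simps)
          have "exp (- ?l * u) * (exp (c * (t - u)) / M * ((?l + c) * V x))
              = (exp (- ?l * u) * exp (c * (t - u))) * ((?l + c) * V x) / M" by simp
          also have "\<dots> = K * (?l + c) * exp (- (?l + c) * u)"
            unfolding ee K_def by simp
          finally show ?thesis .
        qed
        finally show "exp (- ?l * u) * (\<Sum>y\<in>jump_support q x. q x y * jump_time_cdf q n y (t - u))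
           \<le> K * (?l + c) * exp (- (?l + c) * u) + \<Lambda>^(Suc n) * (t - u)^n / fact n"
          by (simp add: power_mult_distrib)
      next
        show "continuous_on {0..t} (\<lambda>u. K * (?l + c) * exp (- (?l + c) * u) + \<Lambda>^(Suc n) * (t - u)^n / fact n)"
          by (intro continuous_intros) auto
      next
        fix u assume u: "u \<in> {0..t}"
        have "0 \<le> K" unfolding K_def using Vnn[of x] M by simp
        then show "0 \<le> K * (?l + c) * exp (- (?l + c) * u) + \<Lambda>^(Suc n) * (t - u)^n / fact n"
          using u lpos c Lam by simp
      qed
      also have "\<dots> = K * (1 - exp (- (?l + c) * t)) + \<Lambda>^(Suc n) * t^(Suc n) / fact (Suc n)"
        by (rule int_eval) (use lpos c Suc.prems in auto)
      also have "\<dots> \<le> K + (\<Lambda> * t)^(Suc n) / fact (Suc n)"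
      proof -
        have "0 \<le> K" unfolding K_def using Vnn[of x] M by simp
        then have "K * (1 - exp (- (?l + c) * t)) \<le> K" by (simp add: mult_left_le)
        moreover have "\<Lambda>^(Suc n) * t^(Suc n) / fact (Suc n) = (\<Lambda>*t)^(Suc n) / fact (Suc n)"
          by (simp only: power_mult_distrib)
        ultimately show ?thesis by linarith
      qed
      finally show ?thesis using False unfolding K_def by simp
    qed
  qed
qed

lemma crit:
  fixes q :: "'a \<Rightarrow> 'a \<Rightarrow> real" and V :: "'a \<Rightarrow> real"
  assumes qnn: "\<And>x y. 0 \<le> q x y" and Vnn: "\<And>x. 0 \<le> V x" and c: "0 \<le> c"
    and drift: "\<And>x. (\<Sum>y\<in>jump_support q x. q x y * V y) \<le> (total_rate q x + c) * V x"
    and bnd: "\<And>M. \<exists>\<Lambda>\<ge>0. \<forall>x. V x < M \<longrightarrow> total_rate q x \<le> \<Lambda>"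
  shows "non_explosive q"
  unfolding non_explosive_def explosive_def
proof clarify
  fix x T \<epsilon> assume eps: "(0::real) < \<epsilon>" and all: "\<forall>n. \<epsilon> \<le> jump_time_cdf q n x T"
  show False
  proof (cases "0 \<le> T")
    case False
    then show False using all[rule_format, of 0] eps by simp
  next
    case True
    define M where "M = 2 * exp (c * T) * V x / \<epsilon> + 1"
    have "0 \<le> 2 * exp (c * T) * V x / \<epsilon>" using Vnn[of x] eps by simp
    then have Mpos: "0 < M" unfolding M_def by linarith
    have "exp (c * T) * V x / M < \<epsilon> / 2"
    proof -
      have "exp (c * T) * V x * 2 < M * \<epsilon>" unfolding M_def using eps by (simp add: field_simps)
      then show ?thesis using Mpos by (simp add: field_simps)
    qed
    obtain \<Lambda> where Lam: "0 \<le> \<Lambda>" "\<forall>x. V x < M \<longrightarrow> total_rate q x \<le> \<Lambda>" using bnd by blast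
    have lim: "(\<lambda>n. (\<Lambda> * T)^n / fact n) \<longlonglongrightarrow> 0" by (rule fact_lim)
    have "\<forall>\<^sub>F n in sequentially. dist ((\<Lambda> * T)^n / fact n) 0 < \<epsilon> / 2"
      by (rule tendstoD[OF lim]) (use eps in simp)
    then obtain n where "dist ((\<Lambda> * T)^n / fact n) 0 < \<epsilon> / 2"
      by (meson eventually_sequentially order.refl)
    then have "\<bar>(\<Lambda> * T)^n / fact n\<bar> < \<epsilon> / 2" by (simp only: dist_real_def diff_zero)
    then have n: "(\<Lambda> * T)^n / fact n < \<epsilon> / 2" using abs_ge_self[of "(\<Lambda> * T)^n / fact n"] by linarith
    have "jump_time_cdf q n x T \<le> exp (c * T) * V x / M + (\<Lambda> * T)^n / fact n"
      by (rule F_main[OF qnn Vnn c drift Mpos Lam(1)]) (use Lam(2) True in auto)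
    then show False using all[rule_format, of n] n \<open>exp (c * T) * V x / M < \<epsilon> / 2\<close> by simp
  qed
qed



lemma crit2:
  fixes q :: "'a \<Rightarrow> 'a \<Rightarrow> real" and V :: "'a \<Rightarrow> real"
  assumes qnn: "\<And>x y. 0 \<le> q x y" and Vnn: "\<And>x. 0 \<le> V x" and c: "0 \<le> c"
    and drift: "\<And>x. (\<Sum>y\<in>jump_support q x. q x y * (V y - V x)) \<le> c * V x"
    and bnd: "\<And>M. \<exists>\<Lambda>\<ge>0. \<forall>x. V x < M \<longrightarrow> total_rate q x \<le> \<Lambda>"
  shows "non_explosive q"
proof (rule crit[OF qnn Vnn c _ bnd])
  fix x
  have "(\<Sum>y\<in>jump_support q x. q x y * V y)
      = (\<Sum>y\<in>jump_support q x. q x y * (V y - V x) + q x y * V x)"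
    by (rule sum.cong) (simp_all add: algebra_simps)
  also have "\<dots> = (\<Sum>y\<in>jump_support q x. q x y * (V y - V x)) + total_rate q x * V x"
    by (simp add: sum.distrib total_rate_def sum_distrib_right)
  also have "\<dots> \<le> c * V x + total_rate q x * V x" using drift[of x] by simp
  finally show "(\<Sum>y\<in>jump_support q x. q x y * V y) \<le> (total_rate q x + c) * V x"
    by (simp add: algebra_simps)
qed

lemma js_sub:
  assumes "finite T" "jump_support q x \<subseteq> T" "x \<notin> T"
  shows "(\<Sum>y\<in>jump_support q x. q x y * G y) = (\<Sum>y\<in>T. q x y * G y)"
  by (rule sum.mono_neutral_left[OF assms(1,2)]) (use assms(3) in \<open>auto simp: jump_support_def\<close>)

definition Vc :: "nat \<times> nat \<Rightarrow> real" where
  "Vc = (\<lambda>(e, s). real e + ln (1 + real s))"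

lemma chem_js: "jump_support q_chem (e, s) \<subseteq> {(Suc e, s), (e, Suc s)}"
  by (auto simp: jump_support_def q_chem_def split: if_splits)

lemma chem_sum: "(\<Sum>y\<in>jump_support q_chem (e, s). q_chem (e, s) y * G y)
    = real e * G (Suc e, s) + real e * real s * G (e, Suc s)"
proof -
  have "(\<Sum>y\<in>jump_support q_chem (e, s). q_chem (e, s) y * G y)
      = (\<Sum>y\<in>{(Suc e, s), (e, Suc s)}. q_chem (e, s) y * G y)"
    by (rule js_sub[OF _ chem_js]) auto
  also have "\<dots> = real e * G (Suc e, s) + real e * real s * G (e, Suc s)"
    by (simp add: q_chem_def)
  finally show ?thesis .
qed

lemma ln_step: "ln (1 + real (Suc s)) - ln (1 + real s) \<le> 1 / (1 + real s)"
proof -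
  have "ln (1 + real (Suc s)) - ln (1 + real s) = ln ((1 + real (Suc s)) / (1 + real s))"
    by (simp add: ln_div)
  also have "(1 + real (Suc s)) / (1 + real s) = 1 + 1 / (1 + real s)" by (simp add: field_simps)
  also have "ln (1 + 1 / (1 + real s)) \<le> 1 / (1 + real s)"
    by (rule ln_add_one_self_le_self) simp
  finally show ?thesis .
qed

lemma ln_step_nn: "0 \<le> ln (1 + real (Suc s)) - ln (1 + real s)"
  by simp

lemma chem_nonexpl: "non_explosive q_chem"
proof (rule crit2[where V = Vc and c = 2])
  show "\<And>x y. 0 \<le> q_chem x y" by (auto simp: q_chem_def)
  show "\<And>x. 0 \<le> Vc x" by (auto simp: Vc_def)
  show "(0::real) \<le> 2" by simp
next
  fix x :: "nat \<times> nat"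
  obtain e s where x: "x = (e, s)" by force
  have "(\<Sum>y\<in>jump_support q_chem x. q_chem x y * (Vc y - Vc x))
      = real e * 1 + real e * real s * (ln (1 + real (Suc s)) - ln (1 + real s))"
    unfolding x chem_sum by (simp add: Vc_def)
  also have "\<dots> \<le> real e * 1 + real e * (real s * (1 / (1 + real s)))"
    using mult_left_mono[OF ln_step, of "real e * real s" s] by (simp add: algebra_simps)
  also have "\<dots> \<le> real e * 1 + real e * 1"
    by (intro add_left_mono mult_left_mono) auto
  also have "\<dots> \<le> 2 * Vc x" by (simp add: x Vc_def)
  finally show "(\<Sum>y\<in>jump_support q_chem x. q_chem x y * (Vc y - Vc x)) \<le> 2 * Vc x" .
next
  fix M :: real
  show "\<exists>\<Lambda>\<ge>0. \<forall>x. Vc x < M \<longrightarrow> total_rate q_chem x \<le> \<Lambda>"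
  proof (intro exI[of _ "\<bar>M\<bar> + \<bar>M\<bar> * exp M"] conjI allI impI)
    show "0 \<le> \<bar>M\<bar> + \<bar>M\<bar> * exp M" by simp
  next
    fix x :: "nat \<times> nat" assume "Vc x < M"
    obtain e s where x: "x = (e, s)" by force
    have l: "0 \<le> ln (1 + real s)" by simp
    have "real e + ln (1 + real s) < M" using \<open>Vc x < M\<close> by (simp add: x Vc_def)
    then have eM: "real e \<le> \<bar>M\<bar>" using l by linarith
    have "ln (1 + real s) < M" using \<open>Vc x < M\<close> by (simp add: x Vc_def)
    then have "exp (ln (1 + real s)) < exp M" by (rule exp_less_mono)
    then have "1 + real s < exp M" by simp
    then have sM: "real s \<le> exp M" by simp
    have "total_rate q_chem x = real e + real e * real s"
      using chem_sum[of e s "\<lambda>_. 1"] by (simp add: x total_rate_def)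
    also have "\<dots> \<le> \<bar>M\<bar> + \<bar>M\<bar> * exp M"
      by (intro add_mono mult_mono eM sM) auto
    finally show "total_rate q_chem x \<le> \<bar>M\<bar> + \<bar>M\<bar> * exp M" .
  qed
qed

lemma part2:
  fixes c1 c2 c3 c4 :: real
  assumes "c1 > 0" "c2 > 0" "c3 \<ge> 0" "c4 \<ge> 0"
  shows "\<exists>e s :: nat. gen_A (\<lambda>(e', s'). c1 * real e' + c2 * real s') (e, s)
                       > c3 * (c1 * real e + c2 * real s) + c4"
proof -
  define e where "e = Suc (nat (ceiling c3))"
  have e1: "c3 + 1 \<le> real e" unfolding e_def by linarith
  define s where "s = Suc (nat (ceiling ((c3 * c1 * real e + c4) / c2)))"
  have s1: "(c3 * c1 * real e + c4) / c2 < real s" unfolding s_def by linarith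
  then have s2: "c3 * c1 * real e + c4 < c2 * real s" using assms(2) by (simp add: field_simps)
  have "gen_A (\<lambda>(e', s'). c1 * real e' + c2 * real s') (e, s) = real e * c1 + real e * real s * c2"
    by (simp add: gen_A_def algebra_simps)
  moreover have "c3 * (c1 * real e + c2 * real s) + c4 < real e * c1 + real e * real s * c2"
  proof -
    have "(c3 + 1) * (real s * c2) \<le> real e * (real s * c2)"
      by (rule mult_right_mono[OF e1]) (use assms in simp)
    moreover have "0 \<le> real e * c1" using assms by simp
    ultimately show ?thesis using s2 by (simp add: algebra_simps)
  qed
  ultimately show ?thesis by (intro exI[of _ e] exI[of _ s]) simp
qed



lemma delta_le:
  fixes G :: "'b \<Rightarrow> real"
  assumes "0 \<le> w * G a"
  shows "(\<Sum>m\<in>A. (if m = a then w else 0) * G m) \<le> w * G a"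
proof -
  have "(\<Sum>m\<in>A. (if m = a then w else 0) * G m) = (\<Sum>m\<in>A. if m = a then w * G a else 0)"
    by (rule sum.cong) auto
  also have "\<dots> \<le> w * G a"
  proof (cases "finite A")
    case True
    then show ?thesis using assms by (simp add: sum.delta)
  next
    case False
    then show ?thesis using assms by simp
  qed
  finally show ?thesis .
qed

definition RN :: "(nat \<times> nat \<Rightarrow> nat \<times> nat \<Rightarrow> real) \<Rightarrow> (nat \<times> nat) multiset \<Rightarrow> nat \<times> nat
    \<Rightarrow> (nat \<times> nat) multiset \<Rightarrow> real" where
  "RN \<psi> n x m = (case x of (e, s) \<Rightarrow>
            (if m = n - {#x#} + {#(Suc e, s)#} then real e else 0)
          + (if m = n - {#x#} + {#(e, Suc s)#} then real e * real s else 0)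
          + real s * (\<Sum>y\<in>{y. fst y \<le> e \<and> snd y \<le> s}.
                if m = n - {#x#} + {#y, (e - fst y, s - snd y)#} then \<psi> x y else 0))"

lemma qN_RN: "m \<noteq> n \<Longrightarrow> q_N \<psi> n m = (\<Sum>x\<in>set_mset n. real (count n x) * RN \<psi> n x m)"
  unfolding q_N_def RN_def by simp

lemma RN_sum_le:
  fixes G :: "(nat \<times> nat) multiset \<Rightarrow> real"
  assumes Gnn: "\<And>m. 0 \<le> G m" and psi: "\<And>x y. 0 \<le> \<psi> x y"
  shows "(\<Sum>m\<in>A. RN \<psi> n x m * G m) \<le>
     real (fst x) * G (n - {#x#} + {#(Suc (fst x), snd x)#})
   + real (fst x) * real (snd x) * G (n - {#x#} + {#(fst x, Suc (snd x))#})
   + real (snd x) * (\<Sum>y\<in>{y. fst y \<le> fst x \<and> snd y \<le> snd x}.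
        \<psi> x y * G (n - {#x#} + {#y, (fst x - fst y, snd x - snd y)#}))"
proof -
  obtain e s where x: "x = (e, s)" by force
  let ?Y = "{y. fst y \<le> e \<and> snd y \<le> s}"
  let ?a1 = "n - {#x#} + {#(Suc e, s)#}"
  let ?a2 = "n - {#x#} + {#(e, Suc s)#}"
  let ?a3 = "\<lambda>y. n - {#x#} + {#y, (e - fst y, s - snd y)#}"
  have "(\<Sum>m\<in>A. RN \<psi> n x m * G m) =
      (\<Sum>m\<in>A. (if m = ?a1 then real e else 0) * G m)
    + (\<Sum>m\<in>A. (if m = ?a2 then real e * real s else 0) * G m)
    + real s * (\<Sum>y\<in>?Y. (\<Sum>m\<in>A. (if m = ?a3 y then \<psi> x y else 0) * G m))"
    unfolding RN_def x
    by (simp add: sum.distrib algebra_simps sum_distrib_left sum_distrib_right sum.swap[of _ A ?Y])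
  also have "\<dots> \<le> real e * G ?a1 + real e * real s * G ?a2
     + real s * (\<Sum>y\<in>?Y. \<psi> x y * G (?a3 y))"
    apply (intro add_mono delta_le mult_left_mono sum_mono)
    using Gnn psi by auto
  finally show ?thesis unfolding x by simp
qed

lemma qN_nn:
  assumes psi: "\<And>x y. 0 \<le> \<psi> x y"
  shows "0 \<le> q_N \<psi> n m"
  unfolding q_N_def
  by (auto intro!: sum_nonneg mult_nonneg_nonneg add_nonneg_nonneg simp: psi split: prod.split)

lemma qN_sum_le:
  fixes G :: "(nat \<times> nat) multiset \<Rightarrow> real"
  assumes Gnn: "\<And>m. 0 \<le> G m" and psi: "\<And>x y. 0 \<le> \<psi> x y"
  shows "(\<Sum>m\<in>jump_support (q_N \<psi>) n. q_N \<psi> n m * G m) \<le>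
     (\<Sum>x\<in>set_mset n. real (count n x) * (
     real (fst x) * G (n - {#x#} + {#(Suc (fst x), snd x)#})
   + real (fst x) * real (snd x) * G (n - {#x#} + {#(fst x, Suc (snd x))#})
   + real (snd x) * (\<Sum>y\<in>{y. fst y \<le> fst x \<and> snd y \<le> snd x}.
        \<psi> x y * G (n - {#x#} + {#y, (fst x - fst y, snd x - snd y)#}))))" (is "_ \<le> ?R")
proof -
  let ?A = "jump_support (q_N \<psi>) n"
  have "(\<Sum>m\<in>?A. q_N \<psi> n m * G m) = (\<Sum>m\<in>?A. \<Sum>x\<in>set_mset n. real (count n x) * (RN \<psi> n x m * G m))"
    by (rule sum.cong) (auto simp: jump_support_def qN_RN sum_distrib_right mult.assoc)
  also have "\<dots> = (\<Sum>x\<in>set_mset n. real (count n x) * (\<Sum>m\<in>?A. RN \<psi> n x m * G m))"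
    by (simp add: sum.swap[of _ "set_mset n" ?A] sum_distrib_left)
  also have "\<dots> \<le> ?R"
    by (intro sum_mono mult_left_mono RN_sum_le Gnn psi) auto
  finally show ?thesis .
qed



definition ET :: "(nat \<times> nat) multiset \<Rightarrow> nat" where "ET n = (\<Sum>x\<in>#n. fst x)"
definition ST :: "(nat \<times> nat) multiset \<Rightarrow> nat" where "ST n = (\<Sum>x\<in>#n. snd x)"
definition VN :: "(nat \<times> nat) multiset \<Rightarrow> real" where
  "VN n = real (ET n) + ln (1 + real (ST n))"

lemma tot_repl:
  assumes "x \<in># n"
  shows "ET (n - {#x#} + M) + fst x = ET n + ET M" "ST (n - {#x#} + M) + snd x = ST n + ST M"
proof -
  from multi_member_split[OF assms] obtain r where r: "n = add_mset x r" ..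
  show "ET (n - {#x#} + M) + fst x = ET n + ET M" "ST (n - {#x#} + M) + snd x = ST n + ST M"
    unfolding ET_def ST_def by (simp_all add: r)
qed

lemma snd_le_ST: "x \<in># n \<Longrightarrow> snd x \<le> ST n"
proof -
  assume "x \<in># n"
  from multi_member_split[OF this] obtain r where r: "n = add_mset x r" ..
  show ?thesis unfolding ST_def by (simp add: r)
qed

lemma ET_count: "real (ET n) = (\<Sum>x\<in>set_mset n. real (count n x) * real (fst x))"
  unfolding ET_def sum_count_mset by (simp add: of_nat_sum_mset multiset.map_comp o_def)

lemma ST_count: "real (ST n) = (\<Sum>x\<in>set_mset n. real (count n x) * real (snd x))"
  unfolding ST_def sum_count_mset by (simp add: of_nat_sum_mset multiset.map_comp o_def)

lemma qN_nonexpl: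
  assumes fk: "frag_kernel \<psi>"
  shows "non_explosive (q_N \<psi>)"
proof -
  have psi: "\<And>x y. 0 \<le> \<psi> x y" and psi0: "\<And>x y. \<not> (fst y \<le> fst x \<and> snd y \<le> snd x) \<Longrightarrow> \<psi> x y = 0"
    and psi1: "\<And>x. (\<Sum>y\<in>{y. fst y \<le> fst x \<and> snd y \<le> snd x}. \<psi> x y) = 1"
    using fk unfolding frag_kernel_def by blast+
  show ?thesis
  proof (rule crit2[where V = VN and c = 2])
    show "\<And>x y. 0 \<le> q_N \<psi> x y" by (rule qN_nn[OF psi])
    show "\<And>x. 0 \<le> VN x" by (simp add: VN_def)
    show "(0::real) \<le> 2" by simp
  next
    fix n :: "(nat \<times> nat) multiset"
    define G where "G m = max 0 (VN m - VN n)" for m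
    let ?S = "real (ST n)"
    have "(\<Sum>m\<in>jump_support (q_N \<psi>) n. q_N \<psi> n m * (VN m - VN n))
        \<le> (\<Sum>m\<in>jump_support (q_N \<psi>) n. q_N \<psi> n m * G m)"
      by (intro sum_mono mult_left_mono qN_nn psi) (simp add: G_def)
    also have "\<dots> \<le> (\<Sum>x\<in>set_mset n. real (count n x) * (
       real (fst x) * G (n - {#x#} + {#(Suc (fst x), snd x)#})
     + real (fst x) * real (snd x) * G (n - {#x#} + {#(fst x, Suc (snd x))#})
     + real (snd x) * (\<Sum>y\<in>{y. fst y \<le> fst x \<and> snd y \<le> snd x}.
          \<psi> x y * G (n - {#x#} + {#y, (fst x - fst y, snd x - snd y)#}))))"
      by (rule qN_sum_le) (simp_all add: G_def psi)
    also have "\<dots> \<le> (\<Sum>x\<in>set_mset n. real (count n x) * (2 * real (fst x)))"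
    proof (intro sum_mono mult_left_mono)
      fix x assume xn: "x \<in> set_mset n"
      obtain e s where x: "x = (e, s)" by force
      have "ET (n - {#x#} + {#(Suc e, s)#}) + e = ET n + Suc e"
           "ST (n - {#x#} + {#(Suc e, s)#}) + s = ST n + s"
        using tot_repl[OF xn, of "{#(Suc e, s)#}"] by (simp_all add: x ET_def ST_def)
      then have g1: "G (n - {#x#} + {#(Suc e, s)#}) = 1" by (simp add: G_def VN_def)
      have "ET (n - {#x#} + {#(e, Suc s)#}) + e = ET n + e"
           "ST (n - {#x#} + {#(e, Suc s)#}) + s = ST n + Suc s"
        using tot_repl[OF xn, of "{#(e, Suc s)#}"] by (simp_all add: x ET_def ST_def)
      then have "G (n - {#x#} + {#(e, Suc s)#}) = ln (1 + real (Suc (ST n))) - ln (1 + real (ST n))"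
        by (simp add: G_def VN_def)
      then have g2: "G (n - {#x#} + {#(e, Suc s)#}) \<le> 1 / (1 + ?S)" using ln_step by simp
      have g3: "G (n - {#x#} + {#y, (e - fst y, s - snd y)#}) = 0"
        if "fst y \<le> e \<and> snd y \<le> s" for y
      proof -
        have "ET (n - {#x#} + {#y, (e - fst y, s - snd y)#}) + e = ET n + e"
             "ST (n - {#x#} + {#y, (e - fst y, s - snd y)#}) + s = ST n + s"
          using tot_repl[OF xn, of "{#y, (e - fst y, s - snd y)#}"] that by (simp_all add: x ET_def ST_def)
        then show ?thesis by (simp add: G_def VN_def)
      qed
      have sS: "real s \<le> ?S" using snd_le_ST[OF xn] by (simp add: x)
      have "real e * real s * G (n - {#x#} + {#(e, Suc s)#}) \<le> real e * real s * (1 / (1 + ?S))"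
        by (intro mult_left_mono g2) auto
      also have "\<dots> = real e * (real s / (1 + ?S))" by simp
      also have "\<dots> \<le> real e * 1"
        by (intro mult_left_mono) (use sS in auto)
      finally have t2: "real e * real s * G (n - {#x#} + {#(e, Suc s)#}) \<le> real e" by simp
      have t3: "(\<Sum>y\<in>{y. fst y \<le> e \<and> snd y \<le> s}. \<psi> x y * G (n - {#x#} + {#y, (e - fst y, s - snd y)#})) = 0"
      proof (rule sum.neutral, rule ballI)
        fix y assume "y \<in> {y. fst y \<le> e \<and> snd y \<le> s}"
        then have "fst y \<le> e \<and> snd y \<le> s" by simp
        from g3[OF this] show "\<psi> x y * G (n - {#x#} + {#y, (e - fst y, s - snd y)#}) = 0" by simp
      qed
      show "real (fst x) * G (n - {#x#} + {#(Suc (fst x), snd x)#})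
     + real (fst x) * real (snd x) * G (n - {#x#} + {#(fst x, Suc (snd x))#})
     + real (snd x) * (\<Sum>y\<in>{y. fst y \<le> fst x \<and> snd y \<le> snd x}.
          \<psi> x y * G (n - {#x#} + {#y, (fst x - fst y, snd x - snd y)#})) \<le> 2 * real (fst x)"
        using g1 t2 t3 by (simp add: x)
    qed simp
    also have "\<dots> = 2 * real (ET n)" by (simp add: ET_count sum_distrib_left algebra_simps)
    also have "\<dots> \<le> 2 * VN n" by (simp add: VN_def)
    finally show "(\<Sum>m\<in>jump_support (q_N \<psi>) n. q_N \<psi> n m * (VN m - VN n)) \<le> 2 * VN n" .
  next
    fix M :: real
    show "\<exists>\<Lambda>\<ge>0. \<forall>x. VN x < M \<longrightarrow> total_rate (q_N \<psi>) x \<le> \<Lambda>"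
    proof (intro exI[of _ "\<bar>M\<bar> + \<bar>M\<bar> * exp M + exp M"] conjI allI impI)
      show "0 \<le> \<bar>M\<bar> + \<bar>M\<bar> * exp M + exp M" by simp
    next
      fix n assume VM: "VN n < M"
      let ?S = "real (ST n)"
      have l: "0 \<le> ln (1 + ?S)" by simp
      have "real (ET n) + ln (1 + ?S) < M" using VM by (simp add: VN_def)
      then have eM: "real (ET n) \<le> \<bar>M\<bar>" using l by linarith
      have "ln (1 + ?S) < M" using VM by (simp add: VN_def)
      then have "exp (ln (1 + ?S)) < exp M" by (rule exp_less_mono)
      then have "1 + ?S < exp M" by simp
      then have sM: "?S \<le> exp M" by simp
      have "total_rate (q_N \<psi>) n = (\<Sum>m\<in>jump_support (q_N \<psi>) n. q_N \<psi> n m * (\<lambda>_. 1) m)"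
        by (simp add: total_rate_def)
      also have "\<dots> \<le> (\<Sum>x\<in>set_mset n. real (count n x) * (
       real (fst x) * (\<lambda>_. 1) (n - {#x#} + {#(Suc (fst x), snd x)#})
     + real (fst x) * real (snd x) * (\<lambda>_. 1) (n - {#x#} + {#(fst x, Suc (snd x))#})
     + real (snd x) * (\<Sum>y\<in>{y. fst y \<le> fst x \<and> snd y \<le> snd x}.
          \<psi> x y * (\<lambda>_. 1) (n - {#x#} + {#y, (fst x - fst y, snd x - snd y)#}))))"
        by (rule qN_sum_le) (simp_all add: psi)
      also have "\<dots> = (\<Sum>x\<in>set_mset n. real (count n x) * (
       real (fst x) + real (fst x) * real (snd x) + real (snd x)))"
        using psi1 by simp
      also have "\<dots> \<le> (\<Sum>x\<in>set_mset n. real (count n x) * real (fst x) * (1 + ?S)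
          + real (count n x) * real (snd x))"
      proof (rule sum_mono)
        fix x assume xn: "x \<in> set_mset n"
        have "real (snd x) \<le> ?S" using snd_le_ST[OF xn] by simp
        then have "real (fst x) * real (snd x) \<le> real (fst x) * ?S" by (intro mult_left_mono) auto
        then have "real (fst x) + real (fst x) * real (snd x) + real (snd x) \<le> real (fst x) * (1 + ?S) + real (snd x)"
          by (simp add: algebra_simps)
        from mult_left_mono[OF this, of "real (count n x)"]
        show "real (count n x) * (real (fst x) + real (fst x) * real (snd x) + real (snd x))
          \<le> real (count n x) * real (fst x) * (1 + ?S) + real (count n x) * real (snd x)"
          by (simp add: algebra_simps)
      qed
      also have "\<dots> = real (ET n) * (1 + ?S) + ?S"
        by (simp add: ET_count ST_count sum.distrib sum_distrib_right)
      also have "\<dots> \<le> \<bar>M\<bar> * (1 + exp M) + exp M"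
        by (intro add_mono mult_mono eM sM) (use sM in auto)
      finally show "total_rate (q_N \<psi>) n \<le> \<bar>M\<bar> + \<bar>M\<bar> * exp M + exp M" by (simp add: algebra_simps)
    qed
  qed
qed


theorem proposition3p5:
  shows "non_explosive q_chem \<and>
    (\<forall>c1 c2 c3 c4 :: real. c1 > 0 \<longrightarrow> c2 > 0 \<longrightarrow> c3 \<ge> 0 \<longrightarrow> c4 \<ge> 0 \<longrightarrow>
       (\<exists>e s :: nat. gen_A (\<lambda>(e', s'). c1 * real e' + c2 * real s') (e, s)
                       > c3 * (c1 * real e + c2 * real s) + c4)) \<and>
    (\<forall>\<psi>. frag_kernel \<psi> \<longrightarrow> non_explosive (q_N \<psi>))"
  using chem_nonexpl part2 qN_nonexpl by blast

end
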